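(* For every integer $n\ge 1$, $$\Phi^{(3)}[a, a'; bq^n, b'; c; x, y] = \Phi^{(3)}[a, a'; b, b'; c; x, y] + \frac{bx(1-a)}{1-c} \sum_{k=1}^n q^{k-1} \Phi^{(3)}[aq, a'; bq^k, b'; cq; x, y]$$ and $$\Phi^{(3)}[a, a'; bq^{-n}, b'; c; x, y] = \Phi^{(3)}[a, a'; b, b'; c; x, y] - \frac{bx(1-a)}{1-c} \sum_{k=1}^n q^{-k} \Phi^{(3)}[aq, a'; bq^{1-k}, b'; cq; x, y].$$
   Context: Let $q$ be a complex number with $0<|q|<1$. For complex $z$ and integer $m\ge 0$, $(z;q)_m=\prod_{j=0}^{m-1}(1-zq^j)$, with $(z;q)_0=1$. The $q$-Appell function $\Phi^{(3)}$ (which has a single denominator parameter $c$) is $$\Phi^{(3)}[a, a'; b, b'; c; x, y] = \sum_{m, n \geq 0} \frac{(a; q)_m (a'; q)_n (b; q)_m (b'; q)_n}{(q; q)_m (q; q)_n (c; q)_{m+n}} x^m y^n.$$ Identities are understood as identities of power series in $x,y$ (formal, or convergent for small $|x|,|y|$), with complex parameters chosen so that no denominator occurring vanishes. *)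

theory Defs
  imports "HOL-Computational_Algebra.Formal_Power_Series"
begin

definition qpoch :: "complex \<Rightarrow> complex \<Rightarrow> nat \<Rightarrow> complex" where
  "qpoch z q m = (\<Prod>j<m. (1 - z * q ^ j))"

text \<open>The q-Appell function Phi^(3) as a formal power series in two variables x, y,
  represented as an fps in x whose coefficients are fps in y.\<close>
definition Phi3 :: "complex \<Rightarrow> complex \<Rightarrow> complex \<Rightarrow> complex \<Rightarrow> complex \<Rightarrow> complex \<Rightarrow> complex fps fps" where
  "Phi3 q a a' b b' c = Abs_fps (\<lambda>m. Abs_fps (\<lambda>n.
      qpoch a q m * qpoch a' q n * qpoch b q m * qpoch b' q n /
      (qpoch q q m * qpoch q q n * qpoch c q (m + n))))"

definition xvar :: "complex fps fps" where "xvar = fps_X"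
definition cst :: "complex \<Rightarrow> complex fps fps" where "cst t = fps_const (fps_const t)"

end

theory Submission
  imports Defs
begin

lemma qpoch_0[simp]: "qpoch z q 0 = 1" by (simp add: qpoch_def)

lemma qpoch_Suc: "qpoch z q (Suc m) = qpoch z q m * (1 - z * q ^ m)"
  by (simp add: qpoch_def)

lemma qpoch_Suc_shift: "qpoch z q (Suc m) = (1 - z) * qpoch (z * q) q m"
  unfolding qpoch_def by (subst prod.lessThan_Suc_shift) (simp add: mult.assoc)

lemma qpoch_qq_nz:
  assumes "norm (q::complex) < 1" shows "qpoch q q m \<noteq> 0"
proof -
  have "1 - q * q ^ j \<noteq> 0" for j
  proof
    assume "1 - q * q ^ j = 0"
    hence "q ^ Suc j = 1" by simp
    hence "norm q ^ Suc j = 1" by (metis norm_one norm_power)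
    moreover have "norm q ^ Suc j < 1"
      using assms by (metis norm_ge_zero power_Suc power_less_one_iff zero_less_Suc)
    ultimately show False by simp
  qed
  thus ?thesis by (simp add: qpoch_def)
qed

lemma alg:
  fixes A A' B B' Q Qn C a b c s :: complex
  assumes "1 - c \<noteq> 0" "C \<noteq> 0" "Q \<noteq> 0" "Qn \<noteq> 0" "1 - s \<noteq> 0"
  shows "(1 - a) * A * A' * (B * (1 - b * s)) * B' / (Q * (1 - s) * Qn * ((1 - c) * C))
    = (1 - a) * A * A' * ((1 - b) * B) * B' / (Q * (1 - s) * Qn * ((1 - c) * C))
      + b * (1 - a) / (1 - c) * (A * A' * B * B' / (Q * Qn * C))"
proof -
  define K where "K = (1 - a) * A * A' * B * B'"
  define D where "D = Q * Qn * ((1 - c) * C)"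
  have D: "D \<noteq> 0" using assms by (simp add: D_def)
  have s: "1 - s \<noteq> 0" by fact
  have l: "(1 - a) * A * A' * (B * (1 - b * s)) * B' / (Q * (1 - s) * Qn * ((1 - c) * C))
     = K * (1 - b * s) / ((1 - s) * D)" by (simp add: K_def D_def mult_ac)
  have r1: "(1 - a) * A * A' * ((1 - b) * B) * B' / (Q * (1 - s) * Qn * ((1 - c) * C))
     = K * (1 - b) / ((1 - s) * D)" by (simp add: K_def D_def mult_ac)
  have r2: "b * (1 - a) / (1 - c) * (A * A' * B * B' / (Q * Qn * C)) = K * b * (1 - s) / ((1 - s) * D)"
    using s by (simp add: K_def D_def mult_ac)
  have "K * (1 - b * s) = K * (1 - b) + K * b * (1 - s)" by (simp add: algebra_simps)
  hence "K * (1 - b * s) / ((1 - s) * D) = K * (1 - b) / ((1 - s) * D) + K * b * (1 - s) / ((1 - s) * D)"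
    by (simp add: add_divide_distrib)
  thus ?thesis using l r1 r2 by simp
qed

lemma one_step:
  fixes q a a' b b' c :: complex
  assumes "norm q < 1" and cnz: "\<forall>k. qpoch c q k \<noteq> 0"
  shows "Phi3 q a a' (b * q) b' c =
           Phi3 q a a' b b' c
           + cst (b * (1 - a) / (1 - c)) * xvar * Phi3 q (a * q) a' (b * q) b' (c * q)"
proof -
  have c1: "1 - c \<noteq> 0" using cnz[rule_format, of 1] by (simp add: qpoch_def)
  have cq: "qpoch (c*q) q k \<noteq> 0" for k
    using cnz[rule_format, of "Suc k"] by (simp add: qpoch_Suc_shift)
  have qq: "qpoch q q k \<noteq> 0" for k using qpoch_qq_nz[OF assms(1)] .
  show ?thesis
  proof (rule fps_ext)
    fix m
    show "fps_nth (Phi3 q a a' (b * q) b' c) m = fps_nth (Phi3 q a a' b b' c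
           + cst (b * (1 - a) / (1 - c)) * xvar * Phi3 q (a * q) a' (b * q) b' (c * q)) m"
    proof (cases m)
      case 0
      then show ?thesis by (simp add: Phi3_def cst_def xvar_def mult.assoc)
    next
      case (Suc m')
      show ?thesis
      proof (rule fps_ext)
        fix n
        have e1: "qpoch q q (Suc m') = qpoch q q m' * (1 - q ^ Suc m')"
          by (simp add: qpoch_Suc)
        have qs: "1 - q ^ Suc m' \<noteq> 0" using qq[of "Suc m'"] e1 by auto
        have e2: "qpoch c q (Suc m' + n) = (1 - c) * qpoch (c*q) q (m' + n)"
          by (simp add: qpoch_Suc_shift)
        have e3: "qpoch a q (Suc m') = (1 - a) * qpoch (a*q) q m'"
          by (simp add: qpoch_Suc_shift)
        have e4: "qpoch b q (Suc m') = (1 - b) * qpoch (b*q) q m'"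
          by (simp add: qpoch_Suc_shift)
        have e5: "qpoch (b*q) q (Suc m') = qpoch (b*q) q m' * (1 - b * q ^ Suc m')"
          by (simp add: qpoch_Suc mult.assoc)
        show "fps_nth (fps_nth (Phi3 q a a' (b * q) b' c) m) n = fps_nth (fps_nth (Phi3 q a a' b b' c
           + cst (b * (1 - a) / (1 - c)) * xvar * Phi3 q (a * q) a' (b * q) b' (c * q)) m) n"
        proof -
          have key: "qpoch a q (Suc m') * qpoch a' q n * qpoch (b*q) q (Suc m') * qpoch b' q n /
              (qpoch q q (Suc m') * qpoch q q n * qpoch c q (Suc m' + n))
            = qpoch a q (Suc m') * qpoch a' q n * qpoch b q (Suc m') * qpoch b' q n /
              (qpoch q q (Suc m') * qpoch q q n * qpoch c q (Suc m' + n))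
              + b * (1 - a) / (1 - c) * (qpoch (a*q) q m' * qpoch a' q n * qpoch (b*q) q m' * qpoch b' q n /
              (qpoch q q m' * qpoch q q n * qpoch (c*q) q (m' + n)))"
            unfolding e1 e2 e3 e4 e5
            using alg[OF c1 cq[of "m'+n"] qq[of m'] qq[of n] qs] by simp
          show ?thesis using key Suc
            by (simp add: Phi3_def cst_def xvar_def fps_X_mult_nth mult.assoc)
        qed
      qed
    qed
  qed
qed

theorem theorem11:
  fixes q a a' b b' c :: complex and n :: nat
  assumes "0 < norm q" and "norm q < 1"
    and "\<forall>k. qpoch c q k \<noteq> 0"
    and "n \<ge> 1"
  shows "Phi3 q a a' (b * q ^ n) b' c =
           Phi3 q a a' b b' c
           + cst (b * (1 - a) / (1 - c)) * xvar *
             (\<Sum>k=1..n. cst (q ^ (k - 1)) * Phi3 q (a * q) a' (b * q ^ k) b' (c * q)) \<and>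
         Phi3 q a a' (b * q powi (- int n)) b' c =
           Phi3 q a a' b b' c
           - cst (b * (1 - a) / (1 - c)) * xvar *
             (\<Sum>k=1..n. cst (q powi (- int k)) * Phi3 q (a * q) a' (b * q powi (1 - int k)) b' (c * q))"
proof
  have cstm: "cst (x * y) = cst x * cst y" for x y by (simp add: cst_def)
  show "Phi3 q a a' (b * q ^ n) b' c =
           Phi3 q a a' b b' c
           + cst (b * (1 - a) / (1 - c)) * xvar *
             (\<Sum>k=1..n. cst (q ^ (k - 1)) * Phi3 q (a * q) a' (b * q ^ k) b' (c * q))"
  proof (induction n)
    case 0 then show ?case by simp
  next
    case (Suc n)
    have "Phi3 q a a' (b * q ^ Suc n) b' c = Phi3 q a a' (b * q ^ n * q) b' c"
      by (simp add: mult_ac)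
    also have "\<dots> = Phi3 q a a' (b * q ^ n) b' c + cst (b * q ^ n * (1 - a) / (1 - c)) * xvar *
        Phi3 q (a * q) a' (b * q ^ n * q) b' (c * q)"
      by (rule one_step[OF assms(2,3)])
    also have "cst (b * q ^ n * (1 - a) / (1 - c)) = cst (b * (1 - a) / (1 - c)) * cst (q ^ n)"
      by (simp add: cstm[symmetric] mult_ac)
    finally show ?case using Suc.IH
      by (simp add: algebra_simps mult_ac)
  qed
  have q0: "q \<noteq> 0" using assms(1) by auto
  show "Phi3 q a a' (b * q powi (- int n)) b' c =
           Phi3 q a a' b b' c
           - cst (b * (1 - a) / (1 - c)) * xvar *
             (\<Sum>k=1..n. cst (q powi (- int k)) * Phi3 q (a * q) a' (b * q powi (1 - int k)) b' (c * q))"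
  proof (induction n)
    case 0 then show ?case by simp
  next
    case (Suc n)
    have pw: "q powi (- int (Suc n)) * q = q powi (- int n)"
      using q0 by (simp add: power_int_diff power_int_minus field_simps)
    have pw': "q powi (- 1 - int n) * q = q powi (- int n)"
      using pw by simp
    have pw2: "q powi (1 - int (Suc n)) = q powi (- int n)" by simp
    have "Phi3 q a a' (b * q powi (- int n)) b' c = Phi3 q a a' (b * q powi (- int (Suc n)) * q) b' c"
      by (simp only: mult.assoc pw)
    also have "\<dots> = Phi3 q a a' (b * q powi (- int (Suc n))) b' c
        + cst (b * q powi (- int (Suc n)) * (1 - a) / (1 - c)) * xvar *
        Phi3 q (a * q) a' (b * q powi (- int (Suc n)) * q) b' (c * q)"
      by (rule one_step[OF assms(2,3)])
    also have "cst (b * q powi (- int (Suc n)) * (1 - a) / (1 - c))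
        = cst (b * (1 - a) / (1 - c)) * cst (q powi (- int (Suc n)))"
      by (simp add: cstm[symmetric] mult_ac)
    finally have h: "Phi3 q a a' (b * q powi (- int n)) b' c = Phi3 q a a' (b * q powi (- int (Suc n))) b' c
       + cst (b * (1 - a) / (1 - c)) * cst (q powi (- int (Suc n))) * xvar *
        Phi3 q (a * q) a' (b * q powi (- int (Suc n)) * q) b' (c * q)" .
    have "Phi3 q a a' (b * q powi (- int (Suc n))) b' c = Phi3 q a a' (b * q powi (- int n)) b' c
       - cst (b * (1 - a) / (1 - c)) * cst (q powi (- int (Suc n))) * xvar *
        Phi3 q (a * q) a' (b * q powi (- int n)) b' (c * q)"
      using h unfolding mult.assoc[of b] pw by (simp add: algebra_simps)
    then show ?case using Suc.IH pw2
      by (simp add: algebra_simps mult_ac pw' del: of_nat_Suc)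
  qed
qed

end
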